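(* The variety $\mathbb{ML}^{\Box\Diamond}_{\mathrm{d}}$ is generated by its finite members; that is, an identity in the signature $\{\wedge,\vee,\neg,\Box,\Diamond,0,1\}$ holds in every algebra of $\mathbb{ML}^{\Box\Diamond}_{\mathrm{d}}$ if and only if it holds in every finite algebra of $\mathbb{ML}^{\Box\Diamond}_{\mathrm{d}}$.
   Context: A meet-complemented lattice is a lattice $(L,\le)$ such that for every $a\in L$ the element $\neg a=\max\{b\in L: a\wedge b\le c\ \text{for all } c\in L\}$ exists; it is bounded with bottom $0$ and top $1$. For $a\in L$, $\Box a=\max\{b\in L: a\vee\neg b=1\}$ and $\Diamond a=\min\{b\in L: \neg a\vee b=1\}$, when these exist. $\mathbb{ML}^{\Box\Diamond}_{\mathrm{d}}$ is the class of distributive meet-complemented lattices in which $\Box a$ and $\Diamond a$ exist for every $a$, considered as algebras $(L;\wedge,\vee,\neg,\Box,\Diamond,0,1)$. *)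

theory Defs
  imports Main
begin

record 'a mlalg =
  carrier :: "'a set"
  meet :: "'a \<Rightarrow> 'a \<Rightarrow> 'a"
  join :: "'a \<Rightarrow> 'a \<Rightarrow> 'a"
  neg  :: "'a \<Rightarrow> 'a"
  box  :: "'a \<Rightarrow> 'a"
  dia  :: "'a \<Rightarrow> 'a"
  zero :: 'a
  one  :: 'a

definition le :: "('a, 'b) mlalg_scheme \<Rightarrow> 'a \<Rightarrow> 'a \<Rightarrow> bool" where
  "le A x y \<longleftrightarrow> meet A x y = x"

definition is_max :: "('a, 'b) mlalg_scheme \<Rightarrow> 'a set \<Rightarrow> 'a \<Rightarrow> bool" where
  "is_max A S x \<longleftrightarrow> x \<in> S \<and> (\<forall>y\<in>S. le A y x)"

definition is_min :: "('a, 'b) mlalg_scheme \<Rightarrow> 'a set \<Rightarrow> 'a \<Rightarrow> bool" where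
  "is_min A S x \<longleftrightarrow> x \<in> S \<and> (\<forall>y\<in>S. le A x y)"

definition distrib_bounded_lattice :: "('a, 'b) mlalg_scheme \<Rightarrow> bool" where
  "distrib_bounded_lattice A \<longleftrightarrow>
     (let L = carrier A; m = meet A; j = join A in
       (\<forall>x\<in>L. \<forall>y\<in>L. m x y \<in> L \<and> j x y \<in> L) \<and>
       zero A \<in> L \<and> one A \<in> L \<and>
       (\<forall>x\<in>L. \<forall>y\<in>L. m x y = m y x \<and> j x y = j y x) \<and>
       (\<forall>x\<in>L. \<forall>y\<in>L. \<forall>z\<in>L. m x (m y z) = m (m x y) z \<and> j x (j y z) = j (j x y) z) \<and>
       (\<forall>x\<in>L. \<forall>y\<in>L. m x (j x y) = x \<and> j x (m x y) = x) \<and>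
       (\<forall>x\<in>L. \<forall>y\<in>L. \<forall>z\<in>L. m x (j y z) = j (m x y) (m x z)) \<and>
       (\<forall>x\<in>L. le A (zero A) x \<and> le A x (one A)))"

text \<open>Members of the class MLbd: distributive meet-complemented lattices in which
  Box and Dia exist, the operations neg, box, dia being the ones determined by the order.\<close>
definition is_MLbd :: "('a, 'b) mlalg_scheme \<Rightarrow> bool" where
  "is_MLbd A \<longleftrightarrow> distrib_bounded_lattice A \<and>
     (\<forall>a\<in>carrier A.
        is_max A {b\<in>carrier A. \<forall>c\<in>carrier A. le A (meet A a b) c} (neg A a) \<and>
        is_max A {b\<in>carrier A. join A a (neg A b) = one A} (box A a) \<and>
        is_min A {b\<in>carrier A. join A (neg A a) b = one A} (dia A a))"

datatype trm = Var nat | Meet trm trm | Join trm trm | Neg trm | Box trm | Dia trm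
  | Zero | One

primrec eval :: "('a, 'b) mlalg_scheme \<Rightarrow> (nat \<Rightarrow> 'a) \<Rightarrow> trm \<Rightarrow> 'a" where
  "eval A \<rho> (Var n) = \<rho> n"
| "eval A \<rho> (Meet s t) = meet A (eval A \<rho> s) (eval A \<rho> t)"
| "eval A \<rho> (Join s t) = join A (eval A \<rho> s) (eval A \<rho> t)"
| "eval A \<rho> (Neg s) = neg A (eval A \<rho> s)"
| "eval A \<rho> (Box s) = box A (eval A \<rho> s)"
| "eval A \<rho> (Dia s) = dia A (eval A \<rho> s)"
| "eval A \<rho> Zero = zero A"
| "eval A \<rho> One = one A"

definition holds_in :: "('a, 'b) mlalg_scheme \<Rightarrow> trm \<Rightarrow> trm \<Rightarrow> bool" where
  "holds_in A s t \<longleftrightarrow> (\<forall>\<rho>. (\<forall>n. \<rho> n \<in> carrier A) \<longrightarrow> eval A \<rho> s = eval A \<rho> t)"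

end

theory Submission
  imports Defs
begin


locale dl =
  fixes A :: "('a,'b) mlalg_scheme"
  assumes dbl: "distrib_bounded_lattice A"
begin

abbreviation "L \<equiv> carrier A"
abbreviation "mt \<equiv> meet A"
abbreviation "jn \<equiv> join A"
abbreviation "z0 \<equiv> zero A"
abbreviation "o1 \<equiv> one A"

lemma mt_cl[simp,intro]: "x \<in> L \<Longrightarrow> y \<in> L \<Longrightarrow> mt x y \<in> L"
  using dbl unfolding distrib_bounded_lattice_def Let_def by blast
lemma jn_cl[simp,intro]: "x \<in> L \<Longrightarrow> y \<in> L \<Longrightarrow> jn x y \<in> L"
  using dbl unfolding distrib_bounded_lattice_def Let_def by blast
lemma z0_in[simp,intro]: "z0 \<in> L"
  using dbl unfolding distrib_bounded_lattice_def Let_def by blast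
lemma o1_in[simp,intro]: "o1 \<in> L"
  using dbl unfolding distrib_bounded_lattice_def Let_def by blast
lemma mt_comm: "x \<in> L \<Longrightarrow> y \<in> L \<Longrightarrow> mt x y = mt y x"
  using dbl unfolding distrib_bounded_lattice_def Let_def by blast
lemma jn_comm: "x \<in> L \<Longrightarrow> y \<in> L \<Longrightarrow> jn x y = jn y x"
  using dbl unfolding distrib_bounded_lattice_def Let_def by blast
lemma mt_assoc: "x \<in> L \<Longrightarrow> y \<in> L \<Longrightarrow> z \<in> L \<Longrightarrow> mt x (mt y z) = mt (mt x y) z"
  using dbl unfolding distrib_bounded_lattice_def Let_def by blast
lemma jn_assoc: "x \<in> L \<Longrightarrow> y \<in> L \<Longrightarrow> z \<in> L \<Longrightarrow> jn x (jn y z) = jn (jn x y) z"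
  using dbl unfolding distrib_bounded_lattice_def Let_def by blast
lemma abs1: "x \<in> L \<Longrightarrow> y \<in> L \<Longrightarrow> mt x (jn x y) = x"
  using dbl unfolding distrib_bounded_lattice_def Let_def by blast
lemma abs2: "x \<in> L \<Longrightarrow> y \<in> L \<Longrightarrow> jn x (mt x y) = x"
  using dbl unfolding distrib_bounded_lattice_def Let_def by blast
lemma distr: "x \<in> L \<Longrightarrow> y \<in> L \<Longrightarrow> z \<in> L \<Longrightarrow> mt x (jn y z) = jn (mt x y) (mt x z)"
  using dbl unfolding distrib_bounded_lattice_def Let_def by blast
lemma z0_le: "x \<in> L \<Longrightarrow> le A z0 x"
  using dbl unfolding distrib_bounded_lattice_def Let_def by blast
lemma le_o1: "x \<in> L \<Longrightarrow> le A x o1"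
  using dbl unfolding distrib_bounded_lattice_def Let_def by blast

lemma mt_idem[simp]: "x \<in> L \<Longrightarrow> mt x x = x"
  by (metis abs1 abs2 mt_cl)
lemma jn_idem[simp]: "x \<in> L \<Longrightarrow> jn x x = x"
  by (metis abs1 abs2 jn_cl)

lemma le_refl: "le A x x \<Longrightarrow> True" by simp
lemma le_refl'[simp]: "x \<in> L \<Longrightarrow> le A x x" by (simp add: le_def)
lemma le_antisym: "x \<in> L \<Longrightarrow> y \<in> L \<Longrightarrow> le A x y \<Longrightarrow> le A y x \<Longrightarrow> x = y"
  by (metis le_def mt_comm)
lemma le_trans: "x \<in> L \<Longrightarrow> y \<in> L \<Longrightarrow> z \<in> L \<Longrightarrow> le A x y \<Longrightarrow> le A y z \<Longrightarrow> le A x z"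
  by (metis le_def mt_assoc)
lemma le_jn: "x \<in> L \<Longrightarrow> y \<in> L \<Longrightarrow> le A x y \<longleftrightarrow> jn x y = y"
  by (metis abs1 abs2 jn_comm le_def mt_comm)
lemma mt_le1: "x \<in> L \<Longrightarrow> y \<in> L \<Longrightarrow> le A (mt x y) x"
  by (metis le_def mt_assoc mt_comm mt_idem)
lemma mt_le2: "x \<in> L \<Longrightarrow> y \<in> L \<Longrightarrow> le A (mt x y) y"
  by (metis mt_comm mt_le1)
lemma mt_glb: "x \<in> L \<Longrightarrow> y \<in> L \<Longrightarrow> z \<in> L \<Longrightarrow> le A z x \<Longrightarrow> le A z y \<Longrightarrow> le A z (mt x y)"
  by (metis le_def mt_assoc)
lemma jn_ge1: "x \<in> L \<Longrightarrow> y \<in> L \<Longrightarrow> le A x (jn x y)"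
  by (simp add: abs1 le_def)
lemma jn_ge2: "x \<in> L \<Longrightarrow> y \<in> L \<Longrightarrow> le A y (jn x y)"
  by (metis jn_comm jn_ge1)
lemma jn_lub: "x \<in> L \<Longrightarrow> y \<in> L \<Longrightarrow> z \<in> L \<Longrightarrow> le A x z \<Longrightarrow> le A y z \<Longrightarrow> le A (jn x y) z"
proof -
  assume h: "x \<in> L" "y \<in> L" "z \<in> L" "le A x z" "le A y z"
  have a: "jn x z = z" "jn y z = z" using h le_jn by auto
  have "jn (jn x y) z = jn x (jn y z)" using h by (simp add: jn_assoc)
  then have "jn (jn x y) z = z" using a by simp
  then show ?thesis using h le_jn by simp
qed
lemma mt_z0[simp]: "x \<in> L \<Longrightarrow> mt z0 x = z0" using z0_le le_def by metis
lemma mt_z0'[simp]: "x \<in> L \<Longrightarrow> mt x z0 = z0" by (metis mt_comm mt_z0 z0_in)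
lemma mt_o1[simp]: "x \<in> L \<Longrightarrow> mt x o1 = x" using le_o1 le_def by metis
lemma mt_o1'[simp]: "x \<in> L \<Longrightarrow> mt o1 x = x" by (metis mt_comm mt_o1 o1_in)
lemma jn_z0[simp]: "x \<in> L \<Longrightarrow> jn z0 x = x" by (metis le_jn z0_in z0_le)
lemma jn_z0'[simp]: "x \<in> L \<Longrightarrow> jn x z0 = x" by (metis jn_comm jn_z0 z0_in)
lemma jn_o1[simp]: "x \<in> L \<Longrightarrow> jn x o1 = o1" by (metis le_jn le_o1 o1_in)
lemma jn_o1'[simp]: "x \<in> L \<Longrightarrow> jn o1 x = o1" by (metis jn_comm jn_o1 o1_in)

lemma distr_r: "x \<in> L \<Longrightarrow> y \<in> L \<Longrightarrow> z \<in> L \<Longrightarrow> mt (jn y z) x = jn (mt y x) (mt z x)"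
  by (metis distr jn_cl mt_comm)

lemma distr2: "x \<in> L \<Longrightarrow> y \<in> L \<Longrightarrow> z \<in> L \<Longrightarrow> jn x (mt y z) = mt (jn x y) (jn x z)"
proof -
  assume h: "x \<in> L" "y \<in> L" "z \<in> L"
  have "mt (jn x y) (jn x z) = jn (mt (jn x y) x) (mt (jn x y) z)"
    using h by (simp add: distr)
  also have "mt (jn x y) x = x" using h by (metis abs1 mt_comm jn_cl)
  also have "mt (jn x y) z = jn (mt x z) (mt y z)" using h by (simp add: distr_r)
  also have "jn x (jn (mt x z) (mt y z)) = jn (jn x (mt x z)) (mt y z)" using h by (simp add: jn_assoc)
  also have "jn x (mt x z) = x" using h by (simp add: abs2)
  finally show ?thesis by simp
qed

end



context dl
begin

definition mf :: "'a list \<Rightarrow> 'a" where "mf xs = foldr mt xs o1"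
definition jf :: "'a list \<Rightarrow> 'a" where "jf xs = foldr jn xs z0"

lemma mf_simps[simp]: "mf [] = o1" "mf (x#xs) = mt x (mf xs)" by (simp_all add: mf_def)
lemma jf_simps[simp]: "jf [] = z0" "jf (x#xs) = jn x (jf xs)" by (simp_all add: jf_def)

lemma mf_in[simp,intro]: "set xs \<subseteq> L \<Longrightarrow> mf xs \<in> L" by (induction xs) auto
lemma jf_in[simp,intro]: "set xs \<subseteq> L \<Longrightarrow> jf xs \<in> L" by (induction xs) auto

lemma mf_lb: "set xs \<subseteq> L \<Longrightarrow> y \<in> set xs \<Longrightarrow> le A (mf xs) y"
proof (induction xs)
  case Nil then show ?case by simp
next
  case (Cons x xs)
  show ?case
  proof (cases "y = x")
    case True then show ?thesis using Cons by (simp add: mt_le1)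
  next
    case False
    then have "le A (mf xs) y" using Cons by auto
    moreover have "le A (mt x (mf xs)) (mf xs)" using Cons by (intro mt_le2) auto
    ultimately show ?thesis using Cons le_trans[of "mt x (mf xs)" "mf xs" y] by auto
  qed
qed

lemma mf_glb: "set xs \<subseteq> L \<Longrightarrow> z \<in> L \<Longrightarrow> \<forall>y\<in>set xs. le A z y \<Longrightarrow> le A z (mf xs)"
  by (induction xs) (auto simp: le_o1 mt_glb)

lemma jf_ub: "set xs \<subseteq> L \<Longrightarrow> y \<in> set xs \<Longrightarrow> le A y (jf xs)"
proof (induction xs)
  case Nil then show ?case by simp
next
  case (Cons x xs)
  show ?case
  proof (cases "y = x")
    case True then show ?thesis using Cons by (simp add: jn_ge1)
  next
    case False
    then have "le A y (jf xs)" using Cons by auto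
    moreover have "le A (jf xs) (jn x (jf xs))" using Cons by (intro jn_ge2) auto
    ultimately show ?thesis using Cons le_trans[of y "jf xs" "jn x (jf xs)"] by auto
  qed
qed

lemma jf_lub: "set xs \<subseteq> L \<Longrightarrow> z \<in> L \<Longrightarrow> \<forall>y\<in>set xs. le A y z \<Longrightarrow> le A (jf xs) z"
  by (induction xs) (auto simp: z0_le jn_lub)

lemma mf_set: "set xs \<subseteq> L \<Longrightarrow> set xs = set ys \<Longrightarrow> mf xs = mf ys"
  by (metis le_antisym mf_glb mf_in mf_lb)
lemma jf_set: "set xs \<subseteq> L \<Longrightarrow> set xs = set ys \<Longrightarrow> jf xs = jf ys"
  by (metis le_antisym jf_lub jf_in jf_ub)

lemma mf_app: "set xs \<subseteq> L \<Longrightarrow> set ys \<subseteq> L \<Longrightarrow> mf (xs @ ys) = mt (mf xs) (mf ys)"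
  by (induction xs) (auto simp: mt_assoc)
lemma jf_app: "set xs \<subseteq> L \<Longrightarrow> set ys \<subseteq> L \<Longrightarrow> jf (xs @ ys) = jn (jf xs) (jf ys)"
  by (induction xs) (auto simp: jn_assoc)

lemma mt_jf: "x \<in> L \<Longrightarrow> set ys \<subseteq> L \<Longrightarrow> mt x (jf ys) = jf (map (mt x) ys)"
  by (induction ys) (auto simp: distr)

lemma jf_mt_jf: "set xs \<subseteq> L \<Longrightarrow> set ys \<subseteq> L \<Longrightarrow>
   mt (jf xs) (jf ys) = jf (concat (map (\<lambda>x. map (mt x) ys) xs))"
proof (induction xs)
  case Nil then show ?case by simp
next
  case (Cons x xs)
  have "mt (jf (x#xs)) (jf ys) = jn (mt x (jf ys)) (mt (jf xs) (jf ys))"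
    using Cons by (simp add: distr_r)
  also have "\<dots> = jn (jf (map (mt x) ys)) (jf (concat (map (\<lambda>x. map (mt x) ys) xs)))"
    using Cons by (simp add: mt_jf)
  also have "\<dots> = jf (map (mt x) ys @ concat (map (\<lambda>x. map (mt x) ys) xs))"
    using Cons by (subst jf_app) auto
  finally show ?case by simp
qed

definition lst :: "'c set \<Rightarrow> 'c list" where "lst U = (SOME xs. set xs = U)"
lemma set_lst[simp]: "finite U \<Longrightarrow> set (lst U) = U"
  unfolding lst_def by (rule someI_ex) (simp add: finite_list)

lemma lst_empty[simp]: "lst {} = []"
  by (metis set_lst finite.emptyI set_empty)

definition MF :: "'a set \<Rightarrow> 'a" where "MF U = mf (lst U)"
definition JM :: "'a set set \<Rightarrow> 'a" where "JM W = jf (map MF (lst W))"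

lemma MF_in: "finite U \<Longrightarrow> U \<subseteq> L \<Longrightarrow> MF U \<in> L" by (simp add: MF_def)
lemma JM_in: "finite W \<Longrightarrow> \<forall>U\<in>W. finite U \<and> U \<subseteq> L \<Longrightarrow> JM W \<in> L"
  unfolding JM_def by (rule jf_in) (auto simp: MF_in)

lemma MF_un: "finite U \<Longrightarrow> finite V \<Longrightarrow> U \<subseteq> L \<Longrightarrow> V \<subseteq> L \<Longrightarrow> mt (MF U) (MF V) = MF (U \<union> V)"
  unfolding MF_def by (simp add: mf_app[symmetric] mf_set)

lemma MF_single: "s \<in> L \<Longrightarrow> MF {s} = s"
proof -
  assume s: "s \<in> L"
  have "MF {s} = mf [s]" unfolding MF_def by (rule mf_set) (use s in auto)
  then show ?thesis using s by simp
qed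

lemma jf_single: "s \<in> L \<Longrightarrow> set xs = {s} \<Longrightarrow> jf xs = s"
  by (metis jf_set jf_simps jn_z0' list.set(1) list.simps(15) empty_subsetI insert_subset)

lemma JM_single: "s \<in> L \<Longrightarrow> JM {{s}} = s"
  unfolding JM_def by (rule jf_single) (auto simp: MF_single)

lemma JM_empty: "JM {} = z0" unfolding JM_def by simp

lemma JM_one: "JM {{}} = o1"
proof -
  have "MF {} = o1" unfolding MF_def by simp
  then show ?thesis unfolding JM_def by (intro jf_single) auto
qed

lemma JM_un: "finite W \<Longrightarrow> finite W' \<Longrightarrow> \<forall>U\<in>W \<union> W'. finite U \<and> U \<subseteq> L \<Longrightarrow>
  jn (JM W) (JM W') = JM (W \<union> W')"
  unfolding JM_def
  by (subst jf_app[symmetric]) (auto simp: MF_in intro!: jf_set)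

lemma JM_mt: "finite W \<Longrightarrow> finite W' \<Longrightarrow> \<forall>U\<in>W \<union> W'. finite U \<and> U \<subseteq> L \<Longrightarrow>
  mt (JM W) (JM W') = JM ((\<lambda>(U,V). U \<union> V) ` (W \<times> W'))"
proof -
  assume f: "finite W" "finite W'" and h: "\<forall>U\<in>W \<union> W'. finite U \<and> U \<subseteq> L"
  let ?xs = "map MF (lst W)" and ?ys = "map MF (lst W')"
  have "mt (JM W) (JM W') = jf (concat (map (\<lambda>x. map (mt x) ?ys) ?xs))"
    unfolding JM_def using f h by (intro jf_mt_jf) (auto simp: MF_in)
  also have "\<dots> = JM ((\<lambda>(U,V). U \<union> V) ` (W \<times> W'))"
    unfolding JM_def
  proof (rule jf_set)
    show "set (concat (map (\<lambda>x. map (mt x) ?ys) ?xs)) \<subseteq> L"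
      using f h by (auto simp: MF_in)
    show "set (concat (map (\<lambda>x. map (mt x) ?ys) ?xs)) =
          set (map MF (lst ((\<lambda>(U,V). U \<union> V) ` (W \<times> W'))))"
      using f h by (auto simp: MF_un image_iff)
  qed
  finally show ?thesis .
qed

end



lemma max_uniq: "dl A \<Longrightarrow> P \<subseteq> carrier A \<Longrightarrow> is_max A P x \<Longrightarrow> is_max A P y \<Longrightarrow> x = y"
  unfolding is_max_def using dl.le_antisym[of A x y] by blast
lemma min_uniq: "dl A \<Longrightarrow> P \<subseteq> carrier A \<Longrightarrow> is_min A P x \<Longrightarrow> is_min A P y \<Longrightarrow> x = y"
  unfolding is_min_def using dl.le_antisym[of A x y] by blast

context dl
begin

lemma ex_max: "finite P \<Longrightarrow> P \<subseteq> L \<Longrightarrow> z0 \<in> P \<Longrightarrow> (\<forall>x\<in>P. \<forall>y\<in>P. jn x y \<in> P) \<Longrightarrow> \<exists>m. is_max A P m"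
proof -
  assume h: "finite P" "P \<subseteq> L" "z0 \<in> P" "\<forall>x\<in>P. \<forall>y\<in>P. jn x y \<in> P"
  have "\<forall>xs. set xs \<subseteq> P \<longrightarrow> jf xs \<in> P"
  proof
    fix xs show "set xs \<subseteq> P \<longrightarrow> jf xs \<in> P" using h by (induction xs) auto
  qed
  then have "jf (lst P) \<in> P" using h by simp
  moreover have "\<forall>y\<in>P. le A y (jf (lst P))" using h jf_ub[of "lst P"] by auto
  ultimately show ?thesis unfolding is_max_def by blast
qed

lemma ex_min: "finite P \<Longrightarrow> P \<subseteq> L \<Longrightarrow> o1 \<in> P \<Longrightarrow> (\<forall>x\<in>P. \<forall>y\<in>P. mt x y \<in> P) \<Longrightarrow> \<exists>m. is_min A P m"
proof -
  assume h: "finite P" "P \<subseteq> L" "o1 \<in> P" "\<forall>x\<in>P. \<forall>y\<in>P. mt x y \<in> P"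
  have "\<forall>xs. set xs \<subseteq> P \<longrightarrow> mf xs \<in> P"
  proof
    fix xs show "set xs \<subseteq> P \<longrightarrow> mf xs \<in> P" using h by (induction xs) auto
  qed
  then have "mf (lst P) \<in> P" using h by simp
  moreover have "\<forall>y\<in>P. le A (mf (lst P)) y" using h mf_lb[of "lst P"] by auto
  ultimately show ?thesis unfolding is_min_def by blast
qed

end

locale fin = dl +
  fixes S :: "'a set"
  assumes finS: "finite S" and SL: "S \<subseteq> carrier A"
begin

definition D :: "'a set" where "D = JM ` Pow (Pow S)"

lemma D_fin: "finite D" unfolding D_def using finS by simp

lemma PS: "W \<in> Pow (Pow S) \<Longrightarrow> finite W \<and> (\<forall>U\<in>W. finite U \<and> U \<subseteq> L)"
  using finS SL by (auto intro: finite_subset)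

lemma D_L: "D \<subseteq> L"
proof
  fix x assume "x \<in> D"
  then obtain W where "W \<in> Pow (Pow S)" "x = JM W" unfolding D_def by auto
  then show "x \<in> L" using PS[of W] JM_in[of W] by auto
qed

lemma S_D: "S \<subseteq> D"
proof
  fix s assume "s \<in> S"
  then have "JM {{s}} \<in> D" unfolding D_def by auto
  then show "s \<in> D" using JM_single \<open>s \<in> S\<close> SL by auto
qed

lemma z0_D: "z0 \<in> D"
  unfolding D_def using JM_empty by (metis Pow_iff empty_subsetI image_eqI)
lemma o1_D: "o1 \<in> D"
  unfolding D_def using JM_one by (metis Pow_iff empty_subsetI image_eqI insert_subset)

lemma jn_D: "x \<in> D \<Longrightarrow> y \<in> D \<Longrightarrow> jn x y \<in> D"
proof -
  assume "x \<in> D" "y \<in> D"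
  then obtain W W' where w: "W \<in> Pow (Pow S)" "W' \<in> Pow (Pow S)" "x = JM W" "y = JM W'"
    unfolding D_def by auto
  have q: "\<forall>U\<in>W \<union> W'. finite U \<and> U \<subseteq> L" using PS[OF w(1)] PS[OF w(2)] by blast
  have "jn x y = JM (W \<union> W')" unfolding w(3,4) using PS[OF w(1)] PS[OF w(2)] q by (intro JM_un) blast+
  moreover have "W \<union> W' \<in> Pow (Pow S)" using w by auto
  ultimately show ?thesis unfolding D_def by auto
qed

lemma mt_D: "x \<in> D \<Longrightarrow> y \<in> D \<Longrightarrow> mt x y \<in> D"
proof -
  assume "x \<in> D" "y \<in> D"
  then obtain W W' where w: "W \<in> Pow (Pow S)" "W' \<in> Pow (Pow S)" "x = JM W" "y = JM W'"
    unfolding D_def by auto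
  have q: "\<forall>U\<in>W \<union> W'. finite U \<and> U \<subseteq> L" using PS[OF w(1)] PS[OF w(2)] by blast
  have "mt x y = JM ((\<lambda>(U,V). U \<union> V) ` (W \<times> W'))" unfolding w(3,4) using PS[OF w(1)] PS[OF w(2)] q by (intro JM_mt) blast+
  moreover have "(\<lambda>(U,V). U \<union> V) ` (W \<times> W') \<in> Pow (Pow S)" using w by auto
  ultimately show ?thesis unfolding D_def by auto
qed

definition NS :: "'a \<Rightarrow> 'a set" where "NS a = {b\<in>D. \<forall>c\<in>D. le A (mt a b) c}"
definition nD :: "'a \<Rightarrow> 'a" where "nD a = (SOME x. is_max A (NS a) x)"
definition BS :: "'a \<Rightarrow> 'a set" where "BS a = {b\<in>D. jn a (nD b) = o1}"
definition bD :: "'a \<Rightarrow> 'a" where "bD a = (SOME x. is_max A (BS a) x)"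
definition DS :: "'a \<Rightarrow> 'a set" where "DS a = {b\<in>D. jn (nD a) b = o1}"
definition dD :: "'a \<Rightarrow> 'a" where "dD a = (SOME x. is_min A (DS a) x)"

lemma x_L: "x \<in> D \<Longrightarrow> x \<in> L" using D_L by auto

lemma nD_max: "a \<in> D \<Longrightarrow> is_max A (NS a) (nD a)"
  unfolding nD_def
proof (rule someI_ex, rule ex_max)
  assume a: "a \<in> D"
  show "finite (NS a)" unfolding NS_def using D_fin by simp
  show "NS a \<subseteq> L" unfolding NS_def using D_L by auto
  show "z0 \<in> NS a" unfolding NS_def using z0_D a by (auto simp: x_L z0_le)
  show "\<forall>x\<in>NS a. \<forall>y\<in>NS a. jn x y \<in> NS a"
    unfolding NS_def using a by (auto simp: jn_D distr x_L intro!: jn_lub mt_D)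
qed

lemma nD_D: "a \<in> D \<Longrightarrow> nD a \<in> D"
  using nD_max unfolding is_max_def NS_def by blast

lemma nD_z0: "nD z0 = o1"
proof -
  have m: "is_max A (NS z0) (nD z0)" using nD_max z0_D by blast
  have "o1 \<in> NS z0" unfolding NS_def using o1_D by (auto simp: x_L z0_le)
  then have "le A o1 (nD z0)" using m unfolding is_max_def by blast
  moreover have "le A (nD z0) o1" using nD_D z0_D x_L le_o1 by blast
  ultimately show ?thesis using le_antisym nD_D z0_D x_L by blast
qed

lemma nD_meet: "b1 \<in> D \<Longrightarrow> b2 \<in> D \<Longrightarrow> le A (mt (nD b1) (nD b2)) (nD (jn b1 b2))"
proof -
  assume b: "b1 \<in> D" "b2 \<in> D"
  let ?n1 = "nD b1" and ?n2 = "nD b2"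
  have n: "?n1 \<in> D" "?n2 \<in> D" using b nD_D by auto
  have c1: "\<forall>c\<in>D. le A (mt b1 ?n1) c" and c2: "\<forall>c\<in>D. le A (mt b2 ?n2) c"
    using nD_max b unfolding is_max_def NS_def by auto
  have "mt (jn b1 b2) (mt ?n1 ?n2) \<in> D" using b n by (simp add: jn_D mt_D)
  have "mt ?n1 ?n2 \<in> NS (jn b1 b2)"
    unfolding NS_def
  proof (intro CollectI conjI ballI)
    show "mt ?n1 ?n2 \<in> D" using n mt_D by auto
    fix c assume c: "c \<in> D"
    have e: "mt (jn b1 b2) (mt ?n1 ?n2) = jn (mt (mt b1 ?n1) ?n2) (mt (mt b2 ?n2) ?n1)"
      using b n by (simp add: x_L distr_r mt_assoc) (metis mt_assoc mt_comm x_L)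
    have "le A (mt (mt b1 ?n1) ?n2) c"
      using c1 c b n le_trans[of "mt (mt b1 ?n1) ?n2" "mt b1 ?n1" c] mt_le1 x_L by auto
    moreover have "le A (mt (mt b2 ?n2) ?n1) c"
      using c2 c b n le_trans[of "mt (mt b2 ?n2) ?n1" "mt b2 ?n2" c] mt_le1 x_L by auto
    ultimately show "le A (mt (jn b1 b2) (mt ?n1 ?n2)) c"
      unfolding e using b n c by (intro jn_lub) (auto simp: x_L)
  qed
  then show ?thesis using nD_max[of "jn b1 b2"] b jn_D unfolding is_max_def by blast
qed

lemma bD_max: "a \<in> D \<Longrightarrow> is_max A (BS a) (bD a)"
  unfolding bD_def
proof (rule someI_ex, rule ex_max)
  assume a: "a \<in> D"
  show "finite (BS a)" unfolding BS_def using D_fin by simp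
  show "BS a \<subseteq> L" unfolding BS_def using D_L by auto
  show "z0 \<in> BS a" unfolding BS_def using z0_D a by (auto simp: x_L nD_z0)
  show "\<forall>x\<in>BS a. \<forall>y\<in>BS a. jn x y \<in> BS a"
    unfolding BS_def
  proof (intro ballI CollectI conjI)
    fix x y assume "x \<in> {b \<in> D. jn a (nD b) = o1}" "y \<in> {b \<in> D. jn a (nD b) = o1}"
    then have h: "x \<in> D" "y \<in> D" "jn a (nD x) = o1" "jn a (nD y) = o1" by auto
    show "jn x y \<in> D" using h jn_D by auto
    have n: "nD x \<in> D" "nD y \<in> D" "nD (jn x y) \<in> D" using h nD_D jn_D by auto
    have "jn a (mt (nD x) (nD y)) = o1" using h n a by (simp add: distr2 x_L)
    moreover have "le A (jn a (mt (nD x) (nD y))) (jn a (nD (jn x y)))"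
      using nD_meet[OF h(1,2)] n a
      by (intro jn_lub) (auto simp: x_L jn_ge1 intro: le_trans[OF _ _ _ _ jn_ge2])
    ultimately have "le A o1 (jn a (nD (jn x y)))" by simp
    then show "jn a (nD (jn x y)) = o1"
      using le_antisym le_o1 n a x_L by (metis jn_cl o1_in)
  qed
qed

lemma dD_min: "a \<in> D \<Longrightarrow> is_min A (DS a) (dD a)"
  unfolding dD_def
proof (rule someI_ex, rule ex_min)
  assume a: "a \<in> D"
  show "finite (DS a)" unfolding DS_def using D_fin by simp
  show "DS a \<subseteq> L" unfolding DS_def using D_L by auto
  show "o1 \<in> DS a" unfolding DS_def using o1_D a nD_D by (auto simp: x_L)
  show "\<forall>x\<in>DS a. \<forall>y\<in>DS a. mt x y \<in> DS a"
    unfolding DS_def using a nD_D by (auto simp: mt_D distr2 x_L)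
qed

end




primrec subs :: "trm \<Rightarrow> trm set" where
  "subs (Var n) = {Var n}"
| "subs (Meet a b) = insert (Meet a b) (subs a \<union> subs b)"
| "subs (Join a b) = insert (Join a b) (subs a \<union> subs b)"
| "subs (Neg a) = insert (Neg a) (subs a)"
| "subs (Box a) = insert (Box a) (subs a)"
| "subs (Dia a) = insert (Dia a) (subs a)"
| "subs Zero = {Zero}"
| "subs One = {One}"

lemma subs_self: "u \<in> subs u" by (cases u) auto
lemma subs_fin: "finite (subs u)" by (induction u) auto

lemma MLbd_dl: "is_MLbd A \<Longrightarrow> dl A"
  unfolding is_MLbd_def dl_def by blast

lemma negA: "is_MLbd A \<Longrightarrow> a \<in> carrier A \<Longrightarrow>
  is_max A {b\<in>carrier A. \<forall>c\<in>carrier A. le A (meet A a b) c} (neg A a)"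
  unfolding is_MLbd_def by blast
lemma boxA: "is_MLbd A \<Longrightarrow> a \<in> carrier A \<Longrightarrow>
  is_max A {b\<in>carrier A. join A a (neg A b) = one A} (box A a)"
  unfolding is_MLbd_def by blast
lemma diaA: "is_MLbd A \<Longrightarrow> a \<in> carrier A \<Longrightarrow>
  is_min A {b\<in>carrier A. join A (neg A a) b = one A} (dia A a)"
  unfolding is_MLbd_def by blast

lemma eval_L: "is_MLbd A \<Longrightarrow> \<forall>n. \<rho> n \<in> carrier A \<Longrightarrow> eval A \<rho> u \<in> carrier A"
proof (induction u)
  case (Neg u) then show ?case using negA[of A "eval A \<rho> u"] unfolding is_max_def by simp
next
  case (Box u) then show ?case using boxA[of A "eval A \<rho> u"] unfolding is_max_def by simp
next
  case (Dia u) then show ?case using diaA[of A "eval A \<rho> u"] unfolding is_min_def by simp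
next
  case (Meet u v) then show ?case using dl.mt_cl[OF MLbd_dl] by simp
next
  case (Join u v) then show ?case using dl.jn_cl[OF MLbd_dl] by simp
next
  case Zero then show ?case using dl.z0_in[OF MLbd_dl] by simp
next
  case One then show ?case using dl.o1_in[OF MLbd_dl] by simp
qed simp

locale fml = fin +
  assumes ml: "is_MLbd A"
begin

lemma NS_sub: "a \<in> D \<Longrightarrow> y \<in> NS a \<Longrightarrow> y \<in> {b\<in>L. \<forall>c\<in>L. le A (mt a b) c}"
proof -
  assume a: "a \<in> D" and y: "y \<in> NS a"
  then have yD: "y \<in> D" and h: "le A (mt a y) z0" using z0_D unfolding NS_def by auto
  have "\<forall>c\<in>L. le A (mt a y) c"
    using h a yD le_trans[of "mt a y" z0] z0_le x_L by auto
  then show ?thesis using yD x_L by auto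
qed

lemma N_agree: "a \<in> D \<Longrightarrow> neg A a \<in> D \<Longrightarrow> nD a = neg A a"
proof -
  assume a: "a \<in> D" and n: "neg A a \<in> D"
  have m: "is_max A {b\<in>L. \<forall>c\<in>L. le A (mt a b) c} (neg A a)" using negA[OF ml] a x_L by blast
  have "is_max A (NS a) (neg A a)"
    unfolding is_max_def
  proof
    show "neg A a \<in> NS a" unfolding NS_def using n m D_L unfolding is_max_def by auto
    show "\<forall>y\<in>NS a. le A y (neg A a)" using NS_sub a m unfolding is_max_def by blast
  qed
  then show ?thesis using max_uniq[of A "NS a"] nD_max[OF a] dl_axioms D_L unfolding NS_def by blast
qed

lemma nD_le: "b \<in> D \<Longrightarrow> le A (nD b) (neg A b)"
proof -
  assume b: "b \<in> D"
  have "nD b \<in> NS b" using nD_max[OF b] unfolding is_max_def by blast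
  then have "nD b \<in> {c\<in>L. \<forall>d\<in>L. le A (mt b c) d}" using NS_sub b by blast
  then show ?thesis using negA[OF ml] b x_L unfolding is_max_def by blast
qed

lemma B_agree: "a \<in> D \<Longrightarrow> box A a \<in> D \<Longrightarrow> neg A (box A a) \<in> D \<Longrightarrow> bD a = box A a"
proof -
  assume a: "a \<in> D" and b: "box A a \<in> D" and n: "neg A (box A a) \<in> D"
  have m: "is_max A {b\<in>L. jn a (neg A b) = o1} (box A a)" using boxA[OF ml] a x_L by blast
  have "is_max A (BS a) (box A a)"
    unfolding is_max_def
  proof
    show "box A a \<in> BS a" unfolding BS_def using b N_agree[OF b n] m unfolding is_max_def by auto
    show "\<forall>y\<in>BS a. le A y (box A a)"
    proof
      fix y assume "y \<in> BS a"
      then have y: "y \<in> D" "jn a (nD y) = o1" unfolding BS_def by auto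
      have yl: "y \<in> L" "nD y \<in> L" "neg A y \<in> L" "a \<in> L"
        using y nD_D x_L a negA[OF ml, of y] unfolding is_max_def by auto
      have "le A (nD y) (jn a (neg A y))"
        using nD_le[OF y(1)] yl jn_ge2 le_trans[of "nD y" "neg A y" "jn a (neg A y)"] by auto
      then have "le A (jn a (nD y)) (jn a (neg A y))"
        using yl by (intro jn_lub) (auto simp: jn_ge1)
      then have "jn a (neg A y) = o1" using y yl le_antisym le_o1 by (metis jn_cl o1_in)
      then show "le A y (box A a)" using m yl unfolding is_max_def by auto
    qed
  qed
  then show ?thesis using max_uniq[of A "BS a"] bD_max[OF a] dl_axioms D_L unfolding BS_def by blast
qed

lemma D_agree: "a \<in> D \<Longrightarrow> neg A a \<in> D \<Longrightarrow> dia A a \<in> D \<Longrightarrow> dD a = dia A a"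
proof -
  assume a: "a \<in> D" and n: "neg A a \<in> D" and d: "dia A a \<in> D"
  have m: "is_min A {b\<in>L. jn (neg A a) b = o1} (dia A a)" using diaA[OF ml] a x_L by blast
  have e: "DS a = {b\<in>D. jn (neg A a) b = o1}" unfolding DS_def using N_agree[OF a n] by simp
  have "is_min A (DS a) (dia A a)"
    unfolding is_min_def e using m d x_L unfolding is_min_def by auto
  then show ?thesis using min_uniq[of A "DS a"] dD_min[OF a] dl_axioms D_L unfolding DS_def by blast
qed

definition Bal where "Bal = A\<lparr>carrier := D, neg := nD, box := bD, dia := dD\<rparr>"

lemma Bal_sel[simp]: "carrier Bal = D" "meet Bal = mt" "join Bal = jn" "zero Bal = z0" "one Bal = o1"
  "neg Bal = nD" "box Bal = bD" "dia Bal = dD"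
  by (simp_all add: Bal_def)

lemma le_Bal[simp]: "le Bal = le A" unfolding Bal_def le_def[abs_def] by simp
lemma is_max_Bal[simp]: "is_max Bal = is_max A" unfolding is_max_def[abs_def] by simp
lemma is_min_Bal[simp]: "is_min Bal = is_min A" unfolding is_min_def[abs_def] by simp

lemma Bal_dbl: "distrib_bounded_lattice Bal"
proof -
  have c: "carrier Bal = D" "meet Bal = mt" "join Bal = jn" "zero Bal = z0" "one Bal = o1"
    by (simp_all add: Bal_def)
  show ?thesis
    unfolding distrib_bounded_lattice_def Let_def le_Bal c
  proof (intro conjI ballI)
    fix x y z assume h: "x \<in> D" "y \<in> D" "z \<in> D"
    show "mt x y \<in> D" using h mt_D by blast
    show "jn x y \<in> D" using h jn_D by blast
    show "mt x y = mt y x" using h x_L mt_comm by blast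
    show "jn x y = jn y x" using h x_L jn_comm by blast
    show "mt x (mt y z) = mt (mt x y) z" using h x_L mt_assoc by blast
    show "jn x (jn y z) = jn (jn x y) z" using h x_L jn_assoc by blast
    show "mt x (jn x y) = x" using h x_L abs1 by blast
    show "jn x (mt x y) = x" using h x_L abs2 by blast
    show "mt x (jn y z) = jn (mt x y) (mt x z)" using h x_L distr by blast
  next
    fix x assume h: "x \<in> D"
    show "le A z0 x" using h x_L z0_le by blast
    show "le A x o1" using h x_L le_o1 by blast
  qed (use z0_D o1_D in auto)
qed

lemma Bal_ML: "is_MLbd Bal"
  unfolding is_MLbd_def
proof (intro conjI Bal_dbl ballI)
  fix a assume "a \<in> carrier Bal"
  then have a: "a \<in> D" by simp
  show "is_max Bal {b \<in> carrier Bal. \<forall>c\<in>carrier Bal. le Bal (meet Bal a b) c} (neg Bal a)"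
    using nD_max[OF a] unfolding NS_def by simp
  show "is_max Bal {b \<in> carrier Bal. join Bal a (neg Bal b) = one Bal} (box Bal a)"
    using bD_max[OF a] unfolding BS_def by simp
  show "is_min Bal {b \<in> carrier Bal. join Bal (neg Bal a) b = one Bal} (dia Bal a)"
    using dD_min[OF a] unfolding DS_def by simp
qed

lemma Bal_fin: "finite (carrier Bal)" using D_fin by simp

lemma eval_agree:
  assumes T: "\<forall>u\<in>T. eval A \<rho> u \<in> D \<and> neg A (eval A \<rho> u) \<in> D \<and> neg A (box A (eval A \<rho> u)) \<in> D"
  shows "subs u \<subseteq> T \<Longrightarrow> eval Bal (\<lambda>n. if \<rho> n \<in> D then \<rho> n else z0) u = eval A \<rho> u"
proof (induction u)
  case (Var n) then show ?case using T by auto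
next
  case (Meet u v) then show ?case by simp
next
  case (Join u v) then show ?case by simp
next
  case (Neg u)
  then have "u \<in> T" "subs u \<subseteq> T" using subs_self by auto
  then show ?case using Neg T N_agree by simp
next
  case (Box u)
  then have "u \<in> T" "Box u \<in> T" "subs u \<subseteq> T" using subs_self by auto
  moreover have "eval A \<rho> (Box u) \<in> D" using T calculation by blast
  ultimately show ?case using Box T B_agree[of "eval A \<rho> u"] by simp
next
  case (Dia u)
  then have "u \<in> T" "Dia u \<in> T" "subs u \<subseteq> T" using subs_self by auto
  moreover have "eval A \<rho> (Dia u) \<in> D" using T calculation by blast
  ultimately show ?case using Dia T D_agree[of "eval A \<rho> u"] by simp
next
  case Zero then show ?case by simp
next
  case One then show ?case by simp
qed

end

lemma fmp:
  fixes A :: "'a mlalg"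
  assumes ml: "is_MLbd A" and r: "\<forall>n. \<rho> n \<in> carrier A" and ne: "eval A \<rho> s \<noteq> eval A \<rho> t"
  shows "\<exists>B :: 'a mlalg. is_MLbd B \<and> finite (carrier B) \<and> \<not> holds_in B s t"
proof -
  define T where "T = subs s \<union> subs t"
  define S where "S = (\<lambda>u. eval A \<rho> u) ` T \<union> (\<lambda>u. neg A (eval A \<rho> u)) ` T
     \<union> (\<lambda>u. neg A (box A (eval A \<rho> u))) ` T"
  have dlA: "dl A" using MLbd_dl[OF ml] .
  have ev: "\<And>u. eval A \<rho> u \<in> carrier A" using eval_L[OF ml r] .
  have ngL: "\<And>x. x \<in> carrier A \<Longrightarrow> neg A x \<in> carrier A"
    using negA[OF ml] unfolding is_max_def by blast
  have bxL: "\<And>x. x \<in> carrier A \<Longrightarrow> box A x \<in> carrier A"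
    using boxA[OF ml] unfolding is_max_def by blast
  have fT: "finite T" unfolding T_def by (simp add: subs_fin)
  have SL: "S \<subseteq> carrier A" unfolding S_def using ev ngL bxL by auto
  have fS: "finite S" unfolding S_def using fT by simp
  interpret F: fml A S
    using dlA fS SL ml by (unfold_locales) (auto simp: dl_def)
  let ?r = "\<lambda>n. if \<rho> n \<in> F.D then \<rho> n else zero A"
  have TT: "\<forall>u\<in>T. eval A \<rho> u \<in> F.D \<and> neg A (eval A \<rho> u) \<in> F.D \<and> neg A (box A (eval A \<rho> u)) \<in> F.D"
    using F.S_D unfolding S_def by blast
  have e1: "eval F.Bal ?r s = eval A \<rho> s" using F.eval_agree[OF TT] unfolding T_def by blast
  have e2: "eval F.Bal ?r t = eval A \<rho> t" using F.eval_agree[OF TT] unfolding T_def by blast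
  have rin: "\<forall>n. ?r n \<in> carrier F.Bal"
  proof
    fix n show "?r n \<in> carrier F.Bal" using F.z0_D by (cases "\<rho> n \<in> F.D") auto
  qed
  have "\<not> holds_in F.Bal s t" unfolding holds_in_def
  proof
    assume "\<forall>\<sigma>. (\<forall>n. \<sigma> n \<in> carrier F.Bal) \<longrightarrow> eval F.Bal \<sigma> s = eval F.Bal \<sigma> t"
    then have "(\<forall>n. ?r n \<in> carrier F.Bal) \<longrightarrow> eval F.Bal ?r s = eval F.Bal ?r t" by (rule spec)
    then have "eval F.Bal ?r s = eval F.Bal ?r t" using rin by (rule mp)
    then show False using e1 e2 ne by simp
  qed
  moreover have "F.Bal \<in> (UNIV :: 'a mlalg set)" by simp
  ultimately show ?thesis using F.Bal_ML F.Bal_fin by blast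
qed

theorem corollary4:
  fixes s t :: trm
  assumes "infinite (UNIV :: 'a set)"
  shows "(\<forall>A :: 'a mlalg. is_MLbd A \<longrightarrow> holds_in A s t) \<longleftrightarrow>
         (\<forall>A :: 'a mlalg. is_MLbd A \<and> finite (carrier A) \<longrightarrow> holds_in A s t)"
proof
  assume "\<forall>A :: 'a mlalg. is_MLbd A \<longrightarrow> holds_in A s t"
  then show "\<forall>A :: 'a mlalg. is_MLbd A \<and> finite (carrier A) \<longrightarrow> holds_in A s t" by blast
next
  assume H: "\<forall>A :: 'a mlalg. is_MLbd A \<and> finite (carrier A) \<longrightarrow> holds_in A s t"
  show "\<forall>A :: 'a mlalg. is_MLbd A \<longrightarrow> holds_in A s t"
  proof (intro allI impI)
    fix A :: "'a mlalg" assume ml: "is_MLbd A"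
    show "holds_in A s t"
    proof (rule ccontr)
      assume "\<not> holds_in A s t"
      then obtain \<rho> where "\<forall>n. \<rho> n \<in> carrier A" "eval A \<rho> s \<noteq> eval A \<rho> t"
        unfolding holds_in_def by blast
      then show False using fmp[OF ml] H by blast
    qed
  qed
qed


end
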